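(* Let $(X,d,\mu)$ be a coarse median space in which rank at most $1$ is achieved under parameters $\rho,H$. Then for any $\zeta\geqslant0$, setting $\zeta'=2H(4)+\zeta$, for all $a,b,c\in X$, $$\mathcal N_\zeta([a,b])\subseteq\mathcal N_{\zeta'}([a,c])\cup\mathcal N_{\zeta'}([c,b]).$$
   Context: Write $x\sim_s y$ if $d(x,y)\leqslant s$. A coarse median space is a triple $(X,d,\mu)$ with $(X,d)$ a metric space and $\mu\colon X^3\to X$ satisfying: (M1) $\mu(a,a,b)=a$; (M2) $\mu(a_1,a_2,a_3)$ is invariant under permutations of its arguments; (C1) there is an affine $\rho(t)=Kt+H_0$ with $d(\mu(a,b,c),\mu(a',b',c'))\leqslant\rho(d(a,a')+d(b,b')+d(c,c'))$ for all points; (C2) there is $H\colon\mathbb N\to[0,\infty)$ such that for every finite $A\subseteq X$ with $1\leqslant|A|\leqslant p$ there are a finite median algebra $(\Pi,\mu_\Pi)$ and maps $\pi\colon A\to\Pi$, $\lambda\colon\Pi\to X$ with $\lambda\mu_\Pi(x,y,z)\sim_{H(p)}\mu(\lambda x,\lambda y,\lambda z)$ for all $x,y,z\in\Pi$ and $\lambda\pi a\sim_{H(p)}a$ for all $a\in A$. (A median algebra is a set with a ternary operation $m$ satisfying $m(a,a,b)=a$, full symmetry, and $m(m(a,b,c),b,d)=m(a,b,m(c,b,d))$; its rank is the supremum of $k$ such that it contains a subalgebra isomorphic to $(\mathbb Z_2)^k$ with coordinatewise majority vote.) "Rank at most $n$ is achieved under parameters $\rho,H$" means $\rho,H$ satisfy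 (C1),(C2) and for every finite $A$ as in (C2) one can choose $(\Pi,\pi,\lambda)$ as in (C2) with $\Pi$ of rank at most $n$ and $\lambda\circ\pi$ equal to the inclusion $A\hookrightarrow X$. The interval is $[a,b]=\{\mu(a,y,b):y\in X\}$, and $\mathcal N_\zeta(S)=\{y\in X:\exists s\in S,\ d(y,s)\leqslant\zeta\}$. *)

theory Defs
  imports "HOL-Analysis.Analysis"
begin

text \<open>Median algebras on a carrier set P (of natural numbers; every finite
median algebra is isomorphic to one carried by a finite set of naturals).\<close>

definition median_algebra :: "'b set \<Rightarrow> ('b \<Rightarrow> 'b \<Rightarrow> 'b \<Rightarrow> 'b) \<Rightarrow> bool" where
  "median_algebra P m \<longleftrightarrow>
     (\<forall>x\<in>P. \<forall>y\<in>P. \<forall>z\<in>P. m x y z \<in> P) \<and>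
     (\<forall>a\<in>P. \<forall>b\<in>P. m a a b = a) \<and>
     (\<forall>a\<in>P. \<forall>b\<in>P. \<forall>c\<in>P. m a b c = m b a c \<and> m a b c = m a c b) \<and>
     (\<forall>a\<in>P. \<forall>b\<in>P. \<forall>c\<in>P. \<forall>d\<in>P. m (m a b c) b d = m a b (m c b d))"

text \<open>The cube (Z_2)^k as boolean lists of length k, with coordinatewise majority vote.\<close>

definition cube :: "nat \<Rightarrow> bool list set" where
  "cube k = {xs. length xs = k}"

definition maj3 :: "bool list \<Rightarrow> bool list \<Rightarrow> bool list \<Rightarrow> bool list" where
  "maj3 xs ys zs = map (\<lambda>(a, b, c). (a \<and> b) \<or> (b \<and> c) \<or> (a \<and> c)) (zip xs (zip ys zs))"

definition contains_cube :: "'b set \<Rightarrow> ('b \<Rightarrow> 'b \<Rightarrow> 'b \<Rightarrow> 'b) \<Rightarrow> nat \<Rightarrow> bool" where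
  "contains_cube P m k \<longleftrightarrow>
     (\<exists>f. inj_on f (cube k) \<and> f ` cube k \<subseteq> P \<and>
          (\<forall>x\<in>cube k. \<forall>y\<in>cube k. \<forall>z\<in>cube k. f (maj3 x y z) = m (f x) (f y) (f z)))"

definition rank_at_most :: "'b set \<Rightarrow> ('b \<Rightarrow> 'b \<Rightarrow> 'b \<Rightarrow> 'b) \<Rightarrow> nat \<Rightarrow> bool" where
  "rank_at_most P m n \<longleftrightarrow> (\<forall>k. contains_cube P m k \<longrightarrow> k \<le> n)"

definition median_axioms_M :: "('a \<Rightarrow> 'a \<Rightarrow> 'a \<Rightarrow> 'a) \<Rightarrow> bool" where
  "median_axioms_M \<mu> \<longleftrightarrow>
     (\<forall>a b. \<mu> a a b = a) \<and>
     (\<forall>a b c. \<mu> a b c = \<mu> b a c \<and> \<mu> a b c = \<mu> a c b)"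

text \<open>(C1) with affine control function rho(t) = K t + H0.\<close>

definition C1 :: "('a::metric_space \<Rightarrow> 'a \<Rightarrow> 'a \<Rightarrow> 'a) \<Rightarrow> real \<Rightarrow> real \<Rightarrow> bool" where
  "C1 \<mu> K H0 \<longleftrightarrow>
     (\<forall>a b c a' b' c'. dist (\<mu> a b c) (\<mu> a' b' c')
        \<le> K * (dist a a' + dist b b' + dist c c') + H0)"

definition C2 :: "('a::metric_space \<Rightarrow> 'a \<Rightarrow> 'a \<Rightarrow> 'a) \<Rightarrow> (nat \<Rightarrow> real) \<Rightarrow> bool" where
  "C2 \<mu> H \<longleftrightarrow> (\<forall>p. H p \<ge> 0) \<and>
     (\<forall>p A. finite A \<and> 1 \<le> card A \<and> card A \<le> p \<longrightarrow>
        (\<exists>(P::nat set) m \<pi> lam. finite P \<and> median_algebra P m \<and> \<pi> ` A \<subseteq> P \<and>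
           (\<forall>x\<in>P. \<forall>y\<in>P. \<forall>z\<in>P. dist (lam (m x y z)) (\<mu> (lam x) (lam y) (lam z)) \<le> H p) \<and>
           (\<forall>a\<in>A. dist (lam (\<pi> a)) a \<le> H p)))"

definition coarse_median :: "('a::metric_space \<Rightarrow> 'a \<Rightarrow> 'a \<Rightarrow> 'a) \<Rightarrow> bool" where
  "coarse_median \<mu> \<longleftrightarrow> median_axioms_M \<mu> \<and> (\<exists>K H0 H. C1 \<mu> K H0 \<and> C2 \<mu> H)"

definition rank_achieved ::
  "('a::metric_space \<Rightarrow> 'a \<Rightarrow> 'a \<Rightarrow> 'a) \<Rightarrow> real \<Rightarrow> real \<Rightarrow> (nat \<Rightarrow> real) \<Rightarrow> nat \<Rightarrow> bool" where
  "rank_achieved \<mu> K H0 H n \<longleftrightarrow> C1 \<mu> K H0 \<and> C2 \<mu> H \<and>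
     (\<forall>p A. finite A \<and> 1 \<le> card A \<and> card A \<le> p \<longrightarrow>
        (\<exists>(P::nat set) m \<pi> lam. finite P \<and> median_algebra P m \<and> rank_at_most P m n \<and>
           \<pi> ` A \<subseteq> P \<and>
           (\<forall>x\<in>P. \<forall>y\<in>P. \<forall>z\<in>P. dist (lam (m x y z)) (\<mu> (lam x) (lam y) (lam z)) \<le> H p) \<and>
           (\<forall>a\<in>A. lam (\<pi> a) = a)))"

definition cm_interval :: "('a \<Rightarrow> 'a \<Rightarrow> 'a \<Rightarrow> 'a) \<Rightarrow> 'a \<Rightarrow> 'a \<Rightarrow> 'a set" where
  "cm_interval \<mu> a b = {\<mu> a y b | y. True}"

definition nbhd :: "real \<Rightarrow> 'a::metric_space set \<Rightarrow> 'a set" where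
  "nbhd \<zeta> S = {y. \<exists>s\<in>S. dist y s \<le> \<zeta>}"

end

theory Submission
  imports Defs
begin

lemma ma_facts:
  assumes "median_algebra P m"
  shows ma_cl: "x\<in>P \<Longrightarrow> y\<in>P \<Longrightarrow> z\<in>P \<Longrightarrow> m x y z \<in> P"
    and ma_maj: "a\<in>P \<Longrightarrow> b\<in>P \<Longrightarrow> m a a b = a"
    and ma_s1: "a\<in>P \<Longrightarrow> b\<in>P \<Longrightarrow> c\<in>P \<Longrightarrow> m a b c = m b a c"
    and ma_s2: "a\<in>P \<Longrightarrow> b\<in>P \<Longrightarrow> c\<in>P \<Longrightarrow> m a b c = m a c b"
    and ma_as: "a\<in>P \<Longrightarrow> b\<in>P \<Longrightarrow> c\<in>P \<Longrightarrow> d\<in>P \<Longrightarrow> m (m a b c) b d = m a b (m c b d)"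
  using assms unfolding median_algebra_def by blast+

lemma ma_l0:
  assumes "median_algebra P m" "a\<in>P" "b\<in>P" "z\<in>P"
  shows "m a (m a z b) b = m a z b"
  using assms ma_facts[OF assms(1)] by (smt (verit, best))

lemma ma_sq:
  assumes "median_algebra P m" "a\<in>P" "b\<in>P" "c\<in>P" "w\<in>P" "m a w b = w"
  shows "m (m a w c) w (m c w b) = w"
    and "m w (m c w b) (m (m a w c) c (m c w b)) = m c w b"
    and "m (m c w b) (m (m a w c) c (m c w b)) (m a w c) = (m (m a w c) c (m c w b))"
    and "m (m (m a w c) c (m c w b)) (m a w c) w  = m a w c"
  using assms ma_facts[OF assms(1)] by (smt (verit, best))+

lemma cube2_cases:
  assumes "xs \<in> cube 2"
  shows "xs = [False,False] \<or> xs = [True,False] \<or> xs = [True,True] \<or> xs = [False,True]"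
proof -
  have "length xs = 2" using assms by (simp add: cube_def)
  then obtain x y where "xs = [x,y]"
    by (metis (no_types, lifting) One_nat_def Suc_1 length_0_conv length_Suc_conv)
  then show ?thesis by (cases x; cases y) auto
qed

lemma square_contains:
  assumes ma: "median_algebra P m" and P: "u\<in>P" "w\<in>P" "v\<in>P" "t\<in>P"
    and r1: "m u w v = w" and r2: "m w v t = v" and r3: "m v t u = t" and r4: "m t u w = u"
    and d1: "u \<noteq> w" and d2: "v \<noteq> w"
  shows "contains_cube P m 2"
proof -
  note F = ma_facts[OF ma]
  have mm: "\<And>x y. x\<in>P \<Longrightarrow> y\<in>P \<Longrightarrow> m x x y = x \<and> m x y x = x \<and> m y x x = x"
    using F by metis
  have R1: "m u w v = w" "m u v w = w" "m w u v = w" "m w v u = w" "m v u w = w" "m v w u = w"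
    using r1 F P by metis+
  have R2: "m w v t = v" "m w t v = v" "m v w t = v" "m v t w = v" "m t w v = v" "m t v w = v"
    using r2 F P by metis+
  have R3: "m v t u = t" "m v u t = t" "m t v u = t" "m t u v = t" "m u v t = t" "m u t v = t"
    using r3 F P by metis+
  have R4: "m t u w = u" "m t w u = u" "m u t w = u" "m u w t = u" "m w t u = u" "m w u t = u"
    using r4 F P by metis+
  have d3: "u \<noteq> v" using R1 mm P d1 by metis
  have d4: "t \<noteq> w" using R2 mm P d2 by metis
  have d5: "t \<noteq> u" using R2 R1 mm P d2 by metis
  have d6: "t \<noteq> v" using R4 R1 mm P d1 by metis
  define f where "f xs = (if xs = [False,False] then u else if xs = [True,False] then w
      else if xs = [True,True] then v else t)" for xs
  have fv: "f [False,False] = u" "f [True,False] = w" "f [True,True] = v" "f [False,True] = t"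
    by (simp_all add: f_def)
  have "inj_on f (cube 2)"
  proof (rule inj_onI)
    fix x y assume "x \<in> cube 2" "y \<in> cube 2" "f x = f y"
    then have cx: "x = [False,False] \<or> x = [True,False] \<or> x = [True,True] \<or> x = [False,True]"
      and cy: "y = [False,False] \<or> y = [True,False] \<or> y = [True,True] \<or> y = [False,True]"
      and e: "f x = f y" using cube2_cases by auto
    from cx cy e show "x = y" using fv d1 d2 d3 d4 d5 d6
      by (elim disjE) (simp_all add: not_sym[OF d1] not_sym[OF d2] not_sym[OF d3] not_sym[OF d4] not_sym[OF d5] not_sym[OF d6])
  qed
  moreover have "f ` cube 2 \<subseteq> P"
    using cube2_cases fv P by fastforce
  moreover have "\<forall>x\<in>cube 2. \<forall>y\<in>cube 2. \<forall>z\<in>cube 2. f (maj3 x y z) = m (f x) (f y) (f z)"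
  proof (intro ballI)
    fix x y z assume "x \<in> cube 2" "y \<in> cube 2" "z \<in> cube 2"
    then have cx: "x = [False,False] \<or> x = [True,False] \<or> x = [True,True] \<or> x = [False,True]"
      and cy: "y = [False,False] \<or> y = [True,False] \<or> y = [True,True] \<or> y = [False,True]"
      and cz: "z = [False,False] \<or> z = [True,False] \<or> z = [True,True] \<or> z = [False,True]"
      using cube2_cases by auto
    from cx cy cz show "f (maj3 x y z) = m (f x) (f y) (f z)"
      by (elim disjE) (simp_all add: maj3_def fv R1 R2 R3 R4 mm P)
  qed
  ultimately show ?thesis unfolding contains_cube_def by blast
qed

lemma rank1_lemma:
  assumes ma: "median_algebra P m" and rk: "rank_at_most P m 1"
    and P: "a\<in>P" "b\<in>P" "c\<in>P" "z\<in>P"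
  shows "m a (m a z b) c = m a z b \<or> m c (m a z b) b = m a z b"
proof (rule ccontr)
  assume n: "\<not> ?thesis"
  define w where "w = m a z b"
  have wP: "w \<in> P" unfolding w_def by (rule ma_cl[OF ma P(1) P(4) P(2)])
  have ww: "m a w b = w" unfolding w_def by (rule ma_l0[OF ma P(1) P(2) P(4)])
  note S = ma_sq[OF ma P(1,2,3) wP ww]
  note F = ma_facts[OF ma]
  have uP: "m a w c \<in> P" by (rule F(1)[OF P(1) wP P(3)])
  have vP: "m c w b \<in> P" by (rule F(1)[OF P(3) wP P(2)])
  have tP: "m (m a w c) c (m c w b) \<in> P" by (rule F(1)[OF uP P(3) vP])
  have n1: "m a w c \<noteq> w" and n2: "m c w b \<noteq> w" using n unfolding w_def by simp_all
  have "contains_cube P m 2"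
    by (rule square_contains[OF ma uP wP vP tP S(1) S(2) S(3) S(4) n1 n2])
  then have "(2::nat) \<le> 1" using rk unfolding rank_at_most_def by blast
  then show False by simp
qed

theorem lemma4p5:
  fixes \<mu> :: "'a::metric_space \<Rightarrow> 'a \<Rightarrow> 'a \<Rightarrow> 'a"
    and K H0 :: real and H :: "nat \<Rightarrow> real" and \<zeta> :: real
  assumes "coarse_median \<mu>"
    and "rank_achieved \<mu> K H0 H 1"
    and "\<zeta> \<ge> 0"
  shows "\<forall>a b c. nbhd \<zeta> (cm_interval \<mu> a b) \<subseteq>
           nbhd (2 * H 4 + \<zeta>) (cm_interval \<mu> a c) \<union> nbhd (2 * H 4 + \<zeta>) (cm_interval \<mu> c b)"
proof (intro allI subsetI)
  fix a b c y
  assume "y \<in> nbhd \<zeta> (cm_interval \<mu> a b)"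
  then obtain z where yz: "dist y (\<mu> a z b) \<le> \<zeta>"
    unfolding nbhd_def cm_interval_def by blast
  define A where "A = set [a,b,c,z]"
  have fA: "finite A" "1 \<le> card A" "card A \<le> 4"
    unfolding A_def using card_length[of "[a,b,c,z]"] by (auto simp: Suc_le_eq card_gt_0_iff)
  have ra: "\<forall>p A. finite A \<and> 1 \<le> card A \<and> card A \<le> p \<longrightarrow>
        (\<exists>(P::nat set) m \<pi> lam. finite P \<and> median_algebra P m \<and> rank_at_most P m 1 \<and>
           \<pi> ` A \<subseteq> P \<and>
           (\<forall>x\<in>P. \<forall>y\<in>P. \<forall>z\<in>P. dist (lam (m x y z)) (\<mu> (lam x) (lam y) (lam z)) \<le> H p) \<and>
           (\<forall>a\<in>A. lam (\<pi> a) = a))"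
    using assms(2) unfolding rank_achieved_def by (elim conjE)
  from ra[rule_format, OF conjI[OF fA(1) conjI[OF fA(2) fA(3)]]]
  obtain P :: "nat set" and m \<pi> and lam :: "nat \<Rightarrow> 'a" where ma: "median_algebra P m" and rk: "rank_at_most P m 1"
    and piA: "\<pi> ` A \<subseteq> P"
    and hom: "\<forall>x\<in>P. \<forall>y\<in>P. \<forall>z\<in>P. dist (lam (m x y z)) (\<mu> (lam x) (lam y) (lam z)) \<le> H 4"
    and lp: "\<forall>a\<in>A. lam (\<pi> a) = a"
    by (elim exE conjE)
  have inP: "\<pi> a \<in> P" "\<pi> b \<in> P" "\<pi> c \<in> P" "\<pi> z \<in> P" using piA A_def by auto
  have lv: "lam (\<pi> a) = a" "lam (\<pi> b) = b" "lam (\<pi> c) = c" "lam (\<pi> z) = z" using lp A_def by auto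
  define w where "w = m (\<pi> a) (\<pi> z) (\<pi> b)"
  have wP: "w \<in> P" using ma_cl[OF ma] inP w_def by blast
  have d1: "dist (lam w) (\<mu> a z b) \<le> H 4" using hom[rule_format, OF inP(1) inP(4) inP(2)] lv unfolding w_def by simp
  have cases: "m (\<pi> a) w (\<pi> c) = w \<or> m (\<pi> c) w (\<pi> b) = w"
    using rank1_lemma[OF ma rk inP(1,2,3,4)] w_def by simp
  then show "y \<in> nbhd (2 * H 4 + \<zeta>) (cm_interval \<mu> a c) \<union> nbhd (2 * H 4 + \<zeta>) (cm_interval \<mu> c b)"
  proof
    assume e: "m (\<pi> a) w (\<pi> c) = w"
    have "dist (lam w) (\<mu> a (lam w) c) \<le> H 4"
      using hom[rule_format, OF inP(1) wP inP(3)] lv e by simp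
    then have "dist y (\<mu> a (lam w) c) \<le> 2 * H 4 + \<zeta>"
      using d1 yz dist_triangle[of y "\<mu> a (lam w) c" "\<mu> a z b"]
        dist_triangle[of "\<mu> a z b" "\<mu> a (lam w) c" "lam w"] by (simp add: dist_commute)
    then show ?thesis unfolding nbhd_def cm_interval_def by blast
  next
    assume e: "m (\<pi> c) w (\<pi> b) = w"
    have "dist (lam w) (\<mu> c (lam w) b) \<le> H 4"
      using hom[rule_format, OF inP(3) wP inP(2)] lv e by simp
    then have "dist y (\<mu> c (lam w) b) \<le> 2 * H 4 + \<zeta>"
      using d1 yz dist_triangle[of y "\<mu> c (lam w) b" "\<mu> a z b"]
        dist_triangle[of "\<mu> a z b" "\<mu> c (lam w) b" "lam w"] by (simp add: dist_commute)
    then show ?thesis unfolding nbhd_def cm_interval_def by blast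
  qed
qed

end
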